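(* Let $n,p$ be positive integers such that $p$ is odd and $n$ and $n+p$ are relatively prime, and let $\gamma_{n,p}(t)=(\sin(nt),\sin((n+p)t))$ for $t\in\mathbb{R}$. Then for every polynomial $P\in\Pi_{8n+4p-1}$ with $\langle P, T_{2(n+p)}(x)T_{2n}(y)\rangle=0$, \[ \frac{1}{\pi^2}\int_{-1}^1\int_{-1}^1 P(x,y)\frac{1}{\sqrt{1-x^2}}\frac{1}{\sqrt{1-y^2}}\,dx\,dy=\frac{1}{2\pi}\int_0^{2\pi}P(\gamma_{n,p}(t))\,dt. \]
   Context: $T_i(x)=\cos(i\arccos x)$ denotes the Chebyshev polynomial of the first kind of degree $i$. For $N\ge 0$, $\Pi_N=\operatorname{span}\{T_i(x)T_j(y): i,j\in\mathbb{N}_0,\ i+j\le N\}$ is the space of bivariate polynomials of total degree at most $N$. The inner product is $\langle f,g\rangle=\frac{1}{\pi^2}\int_{-1}^1\int_{-1}^1 f(x,y)\overline{g(x,y)}\frac{1}{\sqrt{1-x^2}}\frac{1}{\sqrt{1-y^2}}\,dx\,dy$. *)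

theory Defs
  imports "HOL-Analysis.Analysis"
begin

definition cheb :: "nat \<Rightarrow> real \<Rightarrow> real" where
  "cheb i x = cos (real i * arccos x)"

definition PiN :: "nat \<Rightarrow> (real \<Rightarrow> real \<Rightarrow> complex) set" where
  "PiN N = {P. \<exists>c :: nat \<Rightarrow> nat \<Rightarrow> complex.
      P = (\<lambda>x y. \<Sum>(i,j)\<in>{(i,j). i + j \<le> N}. c i j * complex_of_real (cheb i x * cheb j y))}"

definition cheb_weight :: "real \<Rightarrow> real \<Rightarrow> real" where
  "cheb_weight x y = 1 / sqrt (1 - x\<^sup>2) * (1 / sqrt (1 - y\<^sup>2))"

definition cheb_ip :: "(real \<Rightarrow> real \<Rightarrow> complex) \<Rightarrow> (real \<Rightarrow> real \<Rightarrow> complex) \<Rightarrow> complex" where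
  "cheb_ip f g = complex_of_real (1 / pi\<^sup>2) *
     (LINT z : {-1..1} \<times> {-1..1} | lborel.
        f (fst z) (snd z) * cnj (g (fst z) (snd z)) * complex_of_real (cheb_weight (fst z) (snd z)))"

definition gamma_np :: "nat \<Rightarrow> nat \<Rightarrow> real \<Rightarrow> real \<times> real" where
  "gamma_np n p t = (sin (real n * t), sin (real (n + p) * t))"

end

theory Submission
  imports Defs
begin


lemma cont_lims:
  fixes F :: "real \<Rightarrow> real"
  assumes Fc: "continuous_on {-1..1} F"
  shows "(F \<longlongrightarrow> F (-1)) (at_right (-1))" "(F \<longlongrightarrow> F 1) (at_left 1)"
proof -
  have "(F \<longlongrightarrow> F (-1)) (at (-1) within {-1..1})" "(F \<longlongrightarrow> F 1) (at 1 within {-1..1})"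
    using Fc by (auto simp: continuous_on_def)
  moreover have "at (-1) within {-1..1} = at_right (-1::real)" "at 1 within {-1..1} = at_left (1::real)"
    by (simp_all add: at_within_Icc_at_right at_within_Icc_at_left)
  ultimately show "(F \<longlongrightarrow> F (-1)) (at_right (-1))" "(F \<longlongrightarrow> F 1) (at_left 1)" by simp_all
qed

lemma FTC_m11:
  fixes f F :: "real \<Rightarrow> real"
  assumes Fc: "continuous_on {-1..1} F"
    and F: "\<And>x. -1 < x \<Longrightarrow> x < 1 \<Longrightarrow> DERIV F x :> f x"
    and f: "\<And>x. -1 < x \<Longrightarrow> x < 1 \<Longrightarrow> isCont f x"
    and fi: "set_integrable lborel {-1<..<1} f"
  shows "(LBINT x=ereal (-1)..ereal 1. f x) = F 1 - F (-1)"
proof -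
  note A = cont_lims(1)[OF Fc] and B = cont_lims(2)[OF Fc]
  show ?thesis
    apply (rule interval_integral_FTC_integrable[where F=F])
    using F f fi A B
    by (auto simp: has_real_derivative_iff_has_vector_derivative[symmetric] ereal_tendsto_simps1)
qed

lemma w_int: "set_integrable lborel {-1<..<1} (\<lambda>x::real. 1 / sqrt (1 - x\<^sup>2))"
   and "(LBINT x=ereal (-1)..ereal 1. 1 / sqrt (1 - x\<^sup>2)) = pi"
proof -
  have d: "DERIV (\<lambda>x. - arccos x) x :> 1 / sqrt (1 - x\<^sup>2)"
    if x: "ereal (-1) < ereal x" "ereal x < ereal 1" for x
    using x by (auto intro!: derivative_eq_intros simp: divide_simps)
  have c: "isCont (\<lambda>x. 1 / sqrt (1 - x\<^sup>2)) x"
    if x: "ereal (-1) < ereal x" "ereal x < ereal 1" for x using x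
      by (auto intro!: continuous_intros simp: abs_square_less_1 abs_square_eq_1)
  have l1: "(((\<lambda>x. - arccos x) \<circ> real_of_ereal) \<longlongrightarrow> - arccos (- 1)) (at_right (ereal (- 1)))"
      unfolding ereal_tendsto_simps1
      using cont_lims(1)[of "\<lambda>x. - arccos x"] by (auto intro!: continuous_intros continuous_on_arccos')
  have l2: "(((\<lambda>x. - arccos x) \<circ> real_of_ereal) \<longlongrightarrow> - arccos 1) (at_left (ereal 1))"
      unfolding ereal_tendsto_simps1
      using cont_lims(2)[of "\<lambda>x. - arccos x"] by (auto intro!: continuous_intros continuous_on_arccos')
  have ae: "AE x in lborel. ereal (-1) < ereal x \<longrightarrow> ereal x < ereal 1 \<longrightarrow> 0 \<le> 1 / sqrt (1 - x\<^sup>2)"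
      by (intro AE_I2) (auto simp: abs_square_le_1)
  note r = interval_integral_FTC_nonneg[of "ereal (-1)" "ereal 1", OF _ d c ae l1 l2]
  show "set_integrable lborel {-1<..<1} (\<lambda>x::real. 1 / sqrt (1 - x\<^sup>2))"
    "(LBINT x=ereal (-1)..ereal 1. 1 / sqrt (1 - x\<^sup>2)) = pi" using r by auto
qed


lemma cos_rec: "cos ((u::real) + a) = 2 * cos a * cos u - cos (u - a)"
  by (simp add: cos_add cos_diff)

lemma cos_rec2: "cos (real (Suc (Suc i)) * (a::real)) = 2 * cos a * cos (real (Suc i) * a) - cos (real i * a)"
proof -
  have "cos (real (Suc (Suc i)) * a) = cos (real (Suc i) * a + a)" by (simp add: algebra_simps)
  also have "\<dots> = 2 * cos a * cos (real (Suc i) * a) - cos (real (Suc i) * a - a)" by (rule cos_rec)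
  also have "real (Suc i) * a - a = real i * a" by (simp add: algebra_simps)
  finally show ?thesis .
qed

lemma cheb_rec:
  assumes "-1 \<le> x" "x \<le> 1"
  shows "cheb (Suc (Suc i)) x = 2 * x * cheb (Suc i) x - cheb i x"
proof -
  define a where "a = arccos x"
  have ca: "cos a = x" using assms by (simp add: a_def cos_arccos)
  have e1: "real (Suc (Suc i)) * a = real (Suc i) * a + a" by (simp add: algebra_simps)
  have e2: "real i * a = real (Suc i) * a - a" by (simp add: algebra_simps)
  show ?thesis unfolding cheb_def a_def[symmetric] cos_rec2 ca ..
qed

lemma cheb_cos: "cheb i (cos t) = cos (real i * t)"
proof -
  have "cheb i (cos t) = cos (real i * t) \<and> cheb (Suc i) (cos t) = cos (real (Suc i) * t)"
  proof (induction i)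
    case 0
    then show ?case by (simp add: cheb_def cos_arccos)
  next
    case (Suc i)
    have "cheb (Suc (Suc i)) (cos t) = 2 * cos t * cos (real (Suc i) * t) - cos (real i * t)"
      using Suc by (simp add: cheb_rec)
    also have "\<dots> = cos (real (Suc (Suc i)) * t)"
      by (simp only: cos_rec2)
    finally show ?case using Suc by simp
  qed
  then show ?thesis by simp
qed

lemma cheb_sin: "cheb i (sin t) = cos (real i * (pi/2 - t))"
  using cheb_cos[of i "pi/2 - t"] by (simp add: cos_diff)

lemma cheb_abs: "\<bar>cheb i x\<bar> \<le> 1"
  by (simp add: cheb_def)

lemma cheb_mult: "cheb i x * cheb a x = (cheb (i + a) x + cheb (if i \<le> a then a - i else i - a) x) / 2"
proof -
  have "cos (real i * arccos x - real a * arccos x) = cos (real (if i \<le> a then a - i else i - a) * arccos x)"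
  proof (cases "i \<le> a")
    case True
    then have "real i * arccos x - real a * arccos x = - (real (a - i) * arccos x)"
      by (simp add: of_nat_diff algebra_simps)
    then show ?thesis using True by simp
  next
    case False
    then show ?thesis by (simp add: of_nat_diff algebra_simps)
  qed
  then show ?thesis unfolding cheb_def cos_times_cos by (simp add: algebra_simps)
qed

lemma cheb_cont: "continuous_on {-1<..<1} (cheb k)"
  unfolding cheb_def by (auto intro!: continuous_intros)

lemma J1:
  shows "set_integrable lborel {-1<..<1} (\<lambda>x. cheb k x * (1 / sqrt (1 - x\<^sup>2)))"
    and "(LINT x:{-1<..<1}|lborel. cheb k x * (1 / sqrt (1 - x\<^sup>2))) = (if k = 0 then pi else 0)"
proof -
  let ?w = "\<lambda>x::real. 1 / sqrt (1 - x\<^sup>2)"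
  have cw: "continuous_on {-1<..<1} ?w"
    by (auto intro!: continuous_intros simp: abs_square_less_1 power2_eq_1_iff)
  show si: "set_integrable lborel {-1<..<1} (\<lambda>x. cheb k x * ?w x)"
  proof (rule set_integrable_bound[OF w_int(1)])
    show "set_borel_measurable lborel {-1<..<1} (\<lambda>x. cheb k x * ?w x)"
      unfolding set_borel_measurable_def
      by (simp only: measurable_lborel2, rule borel_measurable_continuous_on_indicator)
       (simp, rule continuous_on_mult[OF cheb_cont cw])
    show "AE x in lborel. x \<in> {-1<..<1} \<longrightarrow> norm (cheb k x * ?w x) \<le> norm (?w x)"
    proof (intro AE_I2 impI)
      fix x :: real
      have "\<bar>cheb k x\<bar> * \<bar>?w x\<bar> \<le> 1 * \<bar>?w x\<bar>"
        by (intro mult_right_mono cheb_abs) auto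
      then show "norm (cheb k x * ?w x) \<le> norm (?w x)" by (simp add: abs_mult)
    qed
  qed
  define F where "F x = (if k = 0 then - arccos x else - sin (real k * arccos x) / real k)" for x
  have Fc: "continuous_on {-1..1} F"
    unfolding F_def by (cases "k = 0") (auto intro!: continuous_intros)
  have d: "DERIV F x :> cheb k x * ?w x" if "-1 < x" "x < 1" for x
  proof (cases "k = 0")
    case True
    then show ?thesis using that unfolding F_def cheb_def
      by (auto intro!: derivative_eq_intros simp: divide_simps)
  next
    case False
    have FF: "F = (\<lambda>x. - sin (real k * arccos x) / real k)" using False by (auto simp: F_def fun_eq_iff)
    have "DERIV (\<lambda>x. - sin (real k * arccos x) / real k) x :>
       - (cos (real k * arccos x) * (real k * inverse (- sqrt (1 - x\<^sup>2)))) / real k"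
      by (intro derivative_eq_intros DERIV_arccos[OF that]) (use that False in auto)
    moreover have "- (cos (real k * arccos x) * (real k * inverse (- sqrt (1 - x\<^sup>2)))) / real k
       = cheb k x * ?w x" using False by (simp add: cheb_def field_simps)
    ultimately show ?thesis unfolding FF by simp
  qed
  have c: "isCont (\<lambda>x. cheb k x * ?w x) x" if "-1 < x" "x < 1" for x
    using continuous_on_mult[OF cheb_cont cw] that
    by (simp add: continuous_on_eq_continuous_at)
  have "(LBINT x=ereal (-1)..ereal 1. cheb k x * ?w x) = F 1 - F (-1)"
    by (rule FTC_m11[OF Fc d c si])
  also have "\<dots> = (if k = 0 then pi else 0)"
    by (simp add: F_def sin_npi_int)
  finally show "(LINT x:{-1<..<1}|lborel. cheb k x * ?w x) = (if k = 0 then pi else 0)"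
    by (simp add: interval_lebesgue_integral_def)
qed


lemma K1:
  shows "set_integrable lborel {-1<..<1} (\<lambda>x. cheb i x * cheb a x * (1 / sqrt (1 - x\<^sup>2)))"
    and "(LINT x:{-1<..<1}|lborel. cheb i x * cheb a x * (1 / sqrt (1 - x\<^sup>2))) =
          (if i = a then (if i = 0 then pi else pi / 2) else 0)"
proof -
  let ?w = "\<lambda>x::real. 1 / sqrt (1 - x\<^sup>2)"
  let ?d = "if i \<le> a then a - i else i - a"
  have e: "(\<lambda>x. cheb i x * cheb a x * ?w x) =
      (\<lambda>x. (1/2) * (cheb (i + a) x * ?w x) + (1/2) * (cheb ?d x * ?w x))"
    by (rule ext) (simp add: cheb_mult add_divide_distrib)
  show "set_integrable lborel {-1<..<1} (\<lambda>x. cheb i x * cheb a x * ?w x)"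
    unfolding e by (intro set_integral_add(1) set_integrable_mult_right J1(1))
  have "(LINT x:{-1<..<1}|lborel. cheb i x * cheb a x * ?w x) =
     (1/2) * (LINT x:{-1<..<1}|lborel. cheb (i + a) x * ?w x) + (1/2) * (LINT x:{-1<..<1}|lborel. cheb ?d x * ?w x)"
    unfolding e
    apply (subst set_integral_add(2))
      apply (rule set_integrable_mult_right, rule J1(1))+
    apply (simp only: set_integral_mult_right)
    done
  also have "\<dots> = (if i = a then (if i = 0 then pi else pi / 2) else 0)"
    unfolding J1(2) by auto
  finally show "(LINT x:{-1<..<1}|lborel. cheb i x * cheb a x * ?w x) =
          (if i = a then (if i = 0 then pi else pi / 2) else 0)" .
qed

lemma integral_prod_mult:
  fixes F G :: "real \<Rightarrow> real"
  assumes F: "integrable lborel F" and G: "integrable lborel G"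
  shows "integrable lborel (\<lambda>z::real\<times>real. F (fst z) * G (snd z))"
    and "integral\<^sup>L lborel (\<lambda>z::real\<times>real. F (fst z) * G (snd z)) = integral\<^sup>L lborel F * integral\<^sup>L lborel G"
proof -
  have Fm[measurable]: "F \<in> borel_measurable lborel" using F by (rule borel_measurable_integrable)
  have Gm[measurable]: "G \<in> borel_measurable lborel" using G by (rule borel_measurable_integrable)
  have I: "integrable (lborel \<Otimes>\<^sub>M lborel) (\<lambda>z::real\<times>real. F (fst z) * G (snd z))"
  proof (rule lborel_pair.Fubini_integrable)
    show "(\<lambda>z::real\<times>real. F (fst z) * G (snd z)) \<in> borel_measurable (lborel \<Otimes>\<^sub>M lborel)"
      by measurable
    have "(\<lambda>x. \<integral>y. norm (F (fst (x, y)) * G (snd (x, y))) \<partial>lborel) = (\<lambda>x. norm (F x) * (\<integral>y. norm (G y) \<partial>lborel))"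
      by (simp add: abs_mult)
    then show "integrable lborel (\<lambda>x. \<integral>y. norm (F (fst (x, y)) * G (snd (x, y))) \<partial>lborel)"
      using F by (simp add: integrable_norm)
    show "AE x in lborel. integrable lborel (\<lambda>y. F (fst (x, y)) * G (snd (x, y)))"
      using G by simp
  qed
  then show "integrable lborel (\<lambda>z::real\<times>real. F (fst z) * G (snd z))"
    by (simp add: lborel_prod)
  have "integral\<^sup>L lborel (\<lambda>z::real\<times>real. F (fst z) * G (snd z)) =
     integral\<^sup>L (lborel \<Otimes>\<^sub>M lborel) (\<lambda>z::real\<times>real. F (fst z) * G (snd z))"
    by (simp add: lborel_prod)
  also have "\<dots> = (\<integral>x. (\<integral>y. F (fst (x,y)) * G (snd (x,y)) \<partial>lborel) \<partial>lborel)"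
    using lborel_pair.integral_fst'[OF I] by simp
  also have "\<dots> = integral\<^sup>L lborel F * integral\<^sup>L lborel G"
    by simp
  finally show "integral\<^sup>L lborel (\<lambda>z::real\<times>real. F (fst z) * G (snd z)) = integral\<^sup>L lborel F * integral\<^sup>L lborel G" .
qed


definition kk :: "nat \<Rightarrow> nat \<Rightarrow> real" where
  "kk i a = (if i = a then (if i = 0 then pi else pi / 2) else 0)"

lemma ind_w: "indicator {-1..1} x * (c * (1 / sqrt (1 - x\<^sup>2))) =
   indicator {-1<..<1} x * (c * (1 / sqrt (1 - (x::real)\<^sup>2)))"
  by (cases "x = 1 \<or> x = -1") (auto simp: indicator_def)

lemma Q2:
  shows "set_integrable lborel ({-1..1} \<times> {-1..1})
     (\<lambda>z. cheb i (fst z) * cheb j (snd z) * (cheb a (fst z) * cheb b (snd z)) * cheb_weight (fst z) (snd z))"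
    and "(LINT z:{-1..1} \<times> {-1..1}|lborel.
        cheb i (fst z) * cheb j (snd z) * (cheb a (fst z) * cheb b (snd z)) * cheb_weight (fst z) (snd z))
       = kk i a * kk j b"
proof -
  let ?w = "\<lambda>x::real. 1 / sqrt (1 - x\<^sup>2)"
  define f where "f x = indicator {-1<..<1} x * (cheb i x * cheb a x * ?w x)" for x :: real
  define g where "g x = indicator {-1<..<1} x * (cheb j x * cheb b x * ?w x)" for x :: real
  have fi: "integrable lborel f" using K1(1)[of i a] unfolding f_def[abs_def] set_integrable_def by simp
  have gi: "integrable lborel g" using K1(1)[of j b] unfolding g_def[abs_def] set_integrable_def by simp
  have e: "indicator ({-1..1} \<times> {-1..1}) z *\<^sub>R
       (cheb i (fst z) * cheb j (snd z) * (cheb a (fst z) * cheb b (snd z)) * cheb_weight (fst z) (snd z))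
     = f (fst z) * g (snd z)" for z :: "real \<times> real"
  proof -
    obtain x y where z: "z = (x, y)" by (cases z)
    have "indicator ({-1..1} \<times> {-1..1}) z *\<^sub>R
       (cheb i (fst z) * cheb j (snd z) * (cheb a (fst z) * cheb b (snd z)) * cheb_weight (fst z) (snd z))
      = (indicator {-1..1} x * (cheb i x * cheb a x * ?w x)) * (indicator {-1..1} y * (cheb j y * cheb b y * ?w y))"
      by (simp add: z indicator_times cheb_weight_def)
    also have "\<dots> = f x * g y" unfolding f_def g_def by (simp only: ind_w)
    finally show ?thesis by (simp add: z)
  qed
  show "set_integrable lborel ({-1..1} \<times> {-1..1})
     (\<lambda>z. cheb i (fst z) * cheb j (snd z) * (cheb a (fst z) * cheb b (snd z)) * cheb_weight (fst z) (snd z))"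
    unfolding set_integrable_def e using integral_prod_mult(1)[OF fi gi] .
  have "(LINT z:{-1..1} \<times> {-1..1}|lborel.
        cheb i (fst z) * cheb j (snd z) * (cheb a (fst z) * cheb b (snd z)) * cheb_weight (fst z) (snd z))
     = integral\<^sup>L lborel f * integral\<^sup>L lborel g"
    unfolding set_lebesgue_integral_def e by (rule integral_prod_mult(2)[OF fi gi])
  also have "\<dots> = kk i a * kk j b"
    using K1(2)[of i a] K1(2)[of j b] unfolding f_def[abs_def] g_def[abs_def] set_lebesgue_integral_def kk_def by simp
  finally show "(LINT z:{-1..1} \<times> {-1..1}|lborel.
        cheb i (fst z) * cheb j (snd z) * (cheb a (fst z) * cheb b (snd z)) * cheb_weight (fst z) (snd z))
       = kk i a * kk j b" .
qed



lemma int_cos_lin: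
  "(LBINT t=ereal 0..ereal (2*pi). cos (c - real_of_int k * t)) = (if k = 0 then 2*pi*cos c else 0)"
proof (cases "k = 0")
  case True
  then show ?thesis using interval_integral_const(2)[of "cos c" 0 "2*pi"] by simp
next
  case False
  have "(LBINT t=ereal 0..ereal (2*pi). cos (c - real_of_int k * t)) =
     (- sin (c - real_of_int k * (2*pi)) / real_of_int k) - (- sin (c - real_of_int k * 0) / real_of_int k)"
    using False
    by (intro interval_integral_FTC_finite continuous_intros)
       (auto intro!: derivative_eq_intros simp: has_real_derivative_iff_has_vector_derivative[symmetric])
  also have "sin (c - real_of_int k * (2*pi)) = sin c"
    using sin_int_2pin[of k] cos_int_2pin[of k] by (simp add: sin_diff mult.commute)
  finally show ?thesis using False by simp
qed

lemma set_int_sum_c: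
  fixes g :: "nat \<Rightarrow> nat \<Rightarrow> 'a \<Rightarrow> real" and c :: "nat \<Rightarrow> nat \<Rightarrow> complex"
  assumes S: "finite S" and gi: "\<And>i j. (i, j) \<in> S \<Longrightarrow> set_integrable M A (g i j)"
  shows "(LINT z:A|M. (\<Sum>(i,j)\<in>S. c i j * complex_of_real (g i j z))) =
    (\<Sum>(i,j)\<in>S. c i j * complex_of_real (LINT z:A|M. g i j z))"
  using S gi
proof (induction S rule: finite_induct)
  case empty
  then show ?case by (simp add: set_lebesgue_integral_def)
next
  case (insert x F)
  obtain i j where x: "x = (i, j)" by (cases x)
  have eqf: "\<And>i j. (\<lambda>z. indicator A z *\<^sub>R (c i j * complex_of_real (g i j z))) =
     (\<lambda>z. c i j * complex_of_real (indicator A z *\<^sub>R g i j z))"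
    by (auto simp: fun_eq_iff indicator_def)
  have g1: "set_integrable M A (\<lambda>z. c i j * complex_of_real (g i j z))"
    using insert(4)[of i j] unfolding set_integrable_def x eqf
    by (intro integrable_mult_right integrable_of_real) simp
  have g1': "integrable M (\<lambda>z. indicator A z *\<^sub>R (c i j * complex_of_real (g i j z)))"
    using g1 by (simp add: set_integrable_def)
  have g2: "set_integrable M A (\<lambda>z. \<Sum>(i,j)\<in>F. c i j * complex_of_real (g i j z))"
    unfolding set_integrable_def scaleR_sum_right
  proof (rule Bochner_Integration.integrable_sum[where f="\<lambda>y z. indicator A z *\<^sub>R (case y of (i, j) \<Rightarrow> c i j * complex_of_real (g i j z))"])
    fix y assume y: "y \<in> F"
    obtain i' j' where y': "y = (i', j')" by (cases y)
    show "integrable M (\<lambda>z. indicator A z *\<^sub>R (case y of (i, j) \<Rightarrow> c i j * complex_of_real (g i j z)))"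
      using insert(4)[of i' j'] y y' unfolding set_integrable_def
      by (simp only: eqf prod.case) (intro integrable_mult_right integrable_of_real, simp)
  qed
  have "(LINT z:A|M. (\<Sum>(i,j)\<in>insert x F. c i j * complex_of_real (g i j z))) =
        (LINT z:A|M. c i j * complex_of_real (g i j z) + (\<Sum>(i,j)\<in>F. c i j * complex_of_real (g i j z)))"
    using insert(1,2) x by simp
  also have "\<dots> = (LINT z:A|M. c i j * complex_of_real (g i j z)) + (LINT z:A|M. (\<Sum>(i,j)\<in>F. c i j * complex_of_real (g i j z)))"
    by (rule set_integral_add(2)[OF g1 g2])
  also have "(LINT z:A|M. c i j * complex_of_real (g i j z)) = c i j * complex_of_real (LINT z:A|M. g i j z)"
    unfolding set_lebesgue_integral_def eqf by (simp only: integral_mult_right_zero integral_complex_of_real)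
  finally show ?case using insert x by simp
qed


lemma Rint:
  fixes n m i j :: nat
  defines "k1 \<equiv> int i * int n - int j * int m" and "k2 \<equiv> int i * int n + int j * int m"
  shows "(LBINT t=ereal 0..ereal (2*pi). cheb i (sin (real n * t)) * cheb j (sin (real m * t))) =
     pi * ((if k1 = 0 then cos ((real i - real j) * (pi/2)) else 0) +
           (if k2 = 0 then cos ((real i + real j) * (pi/2)) else 0))"
proof -
  define c1 where "c1 = (real i - real j) * (pi/2)"
  define c2 where "c2 = (real i + real j) * (pi/2)"
  have e: "(\<lambda>t. cheb i (sin (real n * t)) * cheb j (sin (real m * t))) =
    (\<lambda>t. cos (c1 - real_of_int k1 * t) / 2 + cos (c2 - real_of_int k2 * t) / 2)"
  proof (rule ext)
    fix t
    have a1: "real i * (pi / 2 - real n * t) - real j * (pi / 2 - real m * t) = c1 - real_of_int k1 * t"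
      by (simp add: c1_def k1_def field_simps)
    have a2: "real i * (pi / 2 - real n * t) + real j * (pi / 2 - real m * t) = c2 - real_of_int k2 * t"
      by (simp add: c2_def k2_def field_simps)
    show "cheb i (sin (real n * t)) * cheb j (sin (real m * t)) =
      cos (c1 - real_of_int k1 * t) / 2 + cos (c2 - real_of_int k2 * t) / 2"
      unfolding cheb_sin cos_times_cos a1 a2 by simp
  qed
  have ii: "interval_lebesgue_integrable lborel (ereal 0) (ereal (2*pi)) (\<lambda>t. cos (c - real_of_int k * t) / 2)" for c k
    by (rule interval_integrable_isCont) (auto intro!: continuous_intros)
  show ?thesis
    unfolding e interval_lebesgue_integral_add(2)[OF ii ii] interval_lebesgue_integral_divide int_cos_lin
    by (simp add: c1_def c2_def field_simps)
qed


lemma cos_odd_half: "odd q \<Longrightarrow> cos (real q * (pi/2)) = 0"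
  using cos_zero_iff by blast

lemma rr_val:
  fixes n p i j :: nat
  assumes n: "n > 0" and p: "odd p" and cop: "coprime n (n + p)" and ij: "i + j \<le> 8 * n + 4 * p - 1"
  shows "pi * ((if int i * int n - int j * int (n + p) = 0 then cos ((real i - real j) * (pi/2)) else 0) +
           (if int i * int n + int j * int (n + p) = 0 then cos ((real i + real j) * (pi/2)) else 0))
     = (if i = 0 \<and> j = 0 then 2 * pi else if i = 2 * (n + p) \<and> j = 2 * n then - pi else 0)"
proof (cases "i = 0 \<and> j = 0")
  case True
  then show ?thesis by simp
next
  case False
  have k2: "int i * int n + int j * int (n + p) \<noteq> 0"
    using False n by (auto simp: add_nonneg_eq_0_iff)
  show ?thesis
  proof (cases "int i * int n - int j * int (n + p) = 0")
    case False
    then have "\<not> (i = 2 * (n + p) \<and> j = 2 * n)" by auto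
    then show ?thesis using False k2 \<open>\<not> (i = 0 \<and> j = 0)\<close> by simp
  next
    case True
    then have eq: "i * n = j * (n + p)"
      by (metis eq_iff_diff_eq_0 of_nat_eq_iff of_nat_mult)
    have "n dvd j * (n + p)" using eq by (metis dvd_triv_right)
    then have "n dvd j" using cop by (simp add: coprime_commute coprime_dvd_mult_left_iff)
    then obtain k where jk: "j = n * k" by (auto elim: dvdE)
    then have "i * n = (k * (n + p)) * n" using eq by (simp add: algebra_simps)
    then have ik: "i = k * (n + p)" using n by simp
    have "k * (2 * n + p) \<le> 8 * n + 4 * p - 1" using ij ik jk by (simp add: algebra_simps)
    then have "k < 4"
    proof -
      assume h: "k * (2 * n + p) \<le> 8 * n + 4 * p - 1"
      show "k < 4"
      proof (rule ccontr)
        assume "\<not> k < 4"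
        then have "4 * (2 * n + p) \<le> k * (2 * n + p)" by (intro mult_right_mono) auto
        then show False using h n by simp
      qed
    qed
    moreover have "k \<noteq> 0" using \<open>\<not> (i = 0 \<and> j = 0)\<close> ik jk by auto
    ultimately have k: "k = 1 \<or> k = 2 \<or> k = 3" by auto
    have d: "(real i - real j) * (pi/2) = real (k * p) * (pi/2)"
      using ik jk by (simp add: algebra_simps)
    show ?thesis
    proof -
      consider "k = 1" | "k = 2" | "k = 3" using k by blast
      then show ?thesis
      proof cases
        case 1
        have c0: "cos ((real i - real j) * (pi/2)) = 0"
          unfolding d by (rule cos_odd_half) (use 1 p in simp)
        have "\<not> (i = 2 * (n + p) \<and> j = 2 * n)" using ik jk 1 n by auto
        then show ?thesis using True k2 c0 \<open>\<not> (i = 0 \<and> j = 0)\<close> by simp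
      next
        case 2
        have "cos (real (k * p) * (pi/2)) = -1"
          using 2 p by (simp add: mult.assoc)
        then have c0: "cos ((real i - real j) * (pi/2)) = -1" unfolding d .
        have "i = 2 * (n + p) \<and> j = 2 * n" using ik jk 2 by auto
        then show ?thesis using True k2 c0 \<open>\<not> (i = 0 \<and> j = 0)\<close> by simp
      next
        case 3
        have c0: "cos ((real i - real j) * (pi/2)) = 0"
          unfolding d by (rule cos_odd_half) (use 3 p in simp)
        have "\<not> (i = 2 * (n + p) \<and> j = 2 * n)" using ik jk 3 n by auto
        then show ?thesis using True k2 c0 \<open>\<not> (i = 0 \<and> j = 0)\<close> by simp
      qed
    qed
  qed
qed


lemma sum_two:
  assumes "finite S" "u \<in> S" "v \<in> S" "u \<noteq> v"
  shows "(\<Sum>x\<in>S. (if x = u then A else if x = v then B else (0::'a::comm_monoid_add))) = A + B"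
proof -
  have "(\<Sum>x\<in>S. (if x = u then A else if x = v then B else 0)) =
     (\<Sum>x\<in>S. (if x = u then A else 0)) + (\<Sum>x\<in>S. (if x = v then B else 0))"
    unfolding sum.distrib[symmetric] by (rule sum.cong) (use assms in auto)
  also have "\<dots> = A + B" using assms by simp
  finally show ?thesis .
qed

theorem lemma1:
  fixes n p :: nat and P :: "real \<Rightarrow> real \<Rightarrow> complex"
  assumes "n > 0" and "p > 0" and "odd p" and "coprime n (n + p)"
    and "P \<in> PiN (8 * n + 4 * p - 1)"
    and "cheb_ip P (\<lambda>x y. complex_of_real (cheb (2 * (n + p)) x * cheb (2 * n) y)) = 0"
  shows "complex_of_real (1 / pi\<^sup>2) *
      (LINT z : {-1..1} \<times> {-1..1} | lborel.
         P (fst z) (snd z) * complex_of_real (cheb_weight (fst z) (snd z)))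
    = complex_of_real (1 / (2 * pi)) *
      (LBINT t=0..2 * pi. P (fst (gamma_np n p t)) (snd (gamma_np n p t)))"
proof -
  define N where "N = 8 * n + 4 * p - 1"
  define S where "S = {(i, j). i + j \<le> N}"
  define a where "a = 2 * (n + p)"
  define b where "b = 2 * n"
  have finS: "finite S"
    by (rule finite_subset[of _ "{..N} \<times> {..N}"]) (auto simp: S_def)
  have aS: "(a, b) \<in> S" and zS: "(0, 0) \<in> S" using assms(1) by (auto simp: S_def N_def a_def b_def)
  have ab0: "a \<noteq> 0" "b \<noteq> 0" using assms(1) by (auto simp: a_def b_def)
  obtain c where Pc: "P = (\<lambda>x y. \<Sum>(i,j)\<in>S. c i j * complex_of_real (cheb i x * cheb j y))"
    using assms(5) unfolding PiN_def S_def N_def by blast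
  have c0: "cheb 0 x = 1" for x by (simp add: cheb_def)
  have "cheb_ip P (\<lambda>x y. complex_of_real (cheb a x * cheb b y)) =
     complex_of_real (1 / pi\<^sup>2) * (\<Sum>(i,j)\<in>S. c i j * complex_of_real (kk i a * kk j b))"
  proof -
    have e: "(\<lambda>z. P (fst z) (snd z) * cnj (complex_of_real (cheb a (fst z) * cheb b (snd z))) *
         complex_of_real (cheb_weight (fst z) (snd z))) =
       (\<lambda>z. \<Sum>(i,j)\<in>S. c i j * complex_of_real (cheb i (fst z) * cheb j (snd z) *
          (cheb a (fst z) * cheb b (snd z)) * cheb_weight (fst z) (snd z)))"
      unfolding Pc by (auto simp: fun_eq_iff sum_distrib_right intro!: sum.cong)
    show ?thesis unfolding cheb_ip_def e
      by (subst set_int_sum_c[OF finS]) (auto simp: Q2)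
  qed
  also have "(\<Sum>(i,j)\<in>S. c i j * complex_of_real (kk i a * kk j b)) =
      (\<Sum>x\<in>S. (if x = (a, b) then c a b * complex_of_real ((pi/2)^2) else if x = (0,0) then 0 else 0))"
    by (rule sum.cong) (auto simp: kk_def ab0 power2_eq_square split: if_splits)
  also have "\<dots> = c a b * complex_of_real ((pi/2)^2)"
    by (subst sum_two[OF finS aS zS]) (use ab0 in auto)
  finally have "c a b = 0" using assms(6) unfolding a_def b_def by simp
  have LHS: "(LINT z : {-1..1} \<times> {-1..1} | lborel.
         P (fst z) (snd z) * complex_of_real (cheb_weight (fst z) (snd z))) = c 0 0 * complex_of_real (pi\<^sup>2)"
  proof -
    have e: "(\<lambda>z. P (fst z) (snd z) * complex_of_real (cheb_weight (fst z) (snd z))) =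
       (\<lambda>z. \<Sum>(i,j)\<in>S. c i j * complex_of_real (cheb i (fst z) * cheb j (snd z) *
          (cheb 0 (fst z) * cheb 0 (snd z)) * cheb_weight (fst z) (snd z)))"
      unfolding Pc c0 by (auto simp: fun_eq_iff sum_distrib_right intro!: sum.cong)
    have "(LINT z : {-1..1} \<times> {-1..1} | lborel.
         P (fst z) (snd z) * complex_of_real (cheb_weight (fst z) (snd z))) =
        (\<Sum>(i,j)\<in>S. c i j * complex_of_real (kk i 0 * kk j 0))"
      unfolding e by (subst set_int_sum_c[OF finS]) (auto simp: Q2)
    also have "\<dots> = (\<Sum>x\<in>S. (if x = (0, 0) then c 0 0 * complex_of_real (pi\<^sup>2) else if x = (a, b) then 0 else 0))"
      by (rule sum.cong) (auto simp: kk_def power2_eq_square split: if_splits)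
    also have "\<dots> = c 0 0 * complex_of_real (pi\<^sup>2)"
      by (subst sum_two[OF finS zS aS]) (use ab0 in auto)
    finally show ?thesis .
  qed
  have RHS: "(LBINT t=0..2 * pi. P (fst (gamma_np n p t)) (snd (gamma_np n p t))) =
      c 0 0 * complex_of_real (2 * pi) + c a b * complex_of_real (- pi)"
  proof -
    define g where "g i j t = cheb i (sin (real n * t)) * cheb j (sin (real (n + p) * t))" for i j t
    have ei: "einterval 0 (ereal (2*pi)) = {0<..<2*pi}" by (metis einterval_eq_Icc zero_ereal_def)
    have e: "(\<lambda>t. P (fst (gamma_np n p t)) (snd (gamma_np n p t))) =
        (\<lambda>t. \<Sum>(i,j)\<in>S. c i j * complex_of_real (g i j t))"
      by (simp add: Pc gamma_np_def g_def)
    have gi: "set_integrable lborel {0<..<2*pi} (g i j)" for i j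
    proof -
      have "interval_lebesgue_integrable lborel (ereal 0) (ereal (2*pi)) (g i j)"
        by (rule interval_integrable_isCont) (auto simp: g_def[abs_def] cheb_sin intro!: continuous_intros)
      then show ?thesis by (simp add: interval_lebesgue_integrable_def)
    qed
    have gv: "(LINT t:{0<..<2*pi}|lborel. g i j t) =
       (if i = 0 \<and> j = 0 then 2 * pi else if i = 2 * (n + p) \<and> j = 2 * n then - pi else 0)"
      if "(i, j) \<in> S" for i j
    proof -
      have "(LINT t:{0<..<2*pi}|lborel. g i j t) = (LBINT t=ereal 0..ereal (2*pi). g i j t)"
        by (simp add: interval_lebesgue_integral_def)
      also have "\<dots> = (if i = 0 \<and> j = 0 then 2 * pi else if i = 2 * (n + p) \<and> j = 2 * n then - pi else 0)"
        unfolding g_def Rint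
        by (rule rr_val) (use assms that in \<open>auto simp: S_def N_def\<close>)
      finally show ?thesis .
    qed
    have "(LBINT t=0..2 * pi. P (fst (gamma_np n p t)) (snd (gamma_np n p t))) =
        (LINT t:{0<..<2*pi}|lborel. (\<Sum>(i,j)\<in>S. c i j * complex_of_real (g i j t)))"
      unfolding e by (simp add: interval_lebesgue_integral_def ei)
    also have "\<dots> = (\<Sum>(i,j)\<in>S. c i j * complex_of_real (LINT t:{0<..<2*pi}|lborel. g i j t))"
      by (rule set_int_sum_c[OF finS gi])
    also have "\<dots> = (\<Sum>x\<in>S. (if x = (0, 0) then c 0 0 * complex_of_real (2 * pi)
                 else if x = (a, b) then c a b * complex_of_real (- pi) else 0))"
      by (rule sum.cong) (auto simp: gv a_def b_def split: if_splits)
    also have "\<dots> = c 0 0 * complex_of_real (2 * pi) + c a b * complex_of_real (- pi)"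
      by (subst sum_two[OF finS zS aS]) (use ab0 in auto)
    finally show ?thesis .
  qed
  show ?thesis unfolding LHS RHS \<open>c a b = 0\<close> by simp
qed

end
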